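(* Let $X,Y$ be Banach spaces and $N$ an absolute normalized norm on $\mathbb R^2$. (1) If $x\in S_X$ and $y\in S_Y$ are super $\Delta$-points, then $(ax,by)$ is a super $\Delta$-point of $X\oplus_NY$ for every $(a,b)\in\mathbb R^2$ with $N(a,b)=1$. (2) If $x\in S_X$ is a super $\Delta$-point then $(x,0)$ is a super $\Delta$-point of $X\oplus_NY$; if $y\in S_Y$ is a super $\Delta$-point then $(0,y)$ is a super $\Delta$-point of $X\oplus_NY$.
   Context: A norm $N$ on $\mathbb R^2$ is absolute if $N(a,b)=N(|a|,|b|)$ and normalized if $N(1,0)=N(0,1)=1$. $X\oplus_NY$ is $X\times Y$ with norm $\|(x,y)\|=N(\|x\|,\|y\|)$. An element $x\in S_X$ is a super $\Delta$-point if $\sup_{z\in V}\|x-z\|=2$ for every relatively weakly open subset $V$ of $B_X$ containing $x$. *)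

theory Defs
  imports "HOL-Analysis.Analysis"
begin

definition is_norm_R2 :: "(real \<times> real \<Rightarrow> real) \<Rightarrow> bool" where
  "is_norm_R2 N \<longleftrightarrow>
     (\<forall>v. 0 \<le> N v) \<and> (\<forall>v. N v = 0 \<longleftrightarrow> v = (0,0)) \<and>
     (\<forall>c a b. N (c * a, c * b) = \<bar>c\<bar> * N (a, b)) \<and>
     (\<forall>a b c d. N (a + c, b + d) \<le> N (a, b) + N (c, d))"

definition absolute_normalized_norm :: "(real \<times> real \<Rightarrow> real) \<Rightarrow> bool" where
  "absolute_normalized_norm N \<longleftrightarrow> is_norm_R2 N \<and>
     (\<forall>a b. N (a, b) = N (\<bar>a\<bar>, \<bar>b\<bar>)) \<and> N (1, 0) = 1 \<and> N (0, 1) = 1"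

definition sum_norm :: "(real \<times> real \<Rightarrow> real) \<Rightarrow> ('a::real_normed_vector \<times> 'b::real_normed_vector) \<Rightarrow> real" where
  "sum_norm N p = N (norm (fst p), norm (snd p))"

definition weak_open_wrt :: "('a::real_vector \<Rightarrow> real) \<Rightarrow> 'a set \<Rightarrow> bool" where
  "weak_open_wrt nrm = generate_topology
     {{z. f z \<in> U} | f U. linear f \<and> (\<exists>C. \<forall>z. \<bar>f z\<bar> \<le> C * nrm z) \<and> open (U :: real set)}"

definition super_delta_wrt :: "('a::real_vector \<Rightarrow> real) \<Rightarrow> 'a \<Rightarrow> bool" where
  "super_delta_wrt nrm x \<longleftrightarrow> nrm x = 1 \<and>
     (\<forall>W. weak_open_wrt nrm W \<and> x \<in> W \<longrightarrow>
        (SUP z \<in> W \<inter> {z. nrm z \<le> 1}. nrm (x - z)) = 2)"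

end

theory Submission imports Defs begin

context fixes N :: "real \<times> real \<Rightarrow> real" assumes AN: "absolute_normalized_norm N"
begin

lemma N_hom: "N (c * a, c * b) = \<bar>c\<bar> * N (a, b)"
  using AN unfolding absolute_normalized_norm_def is_norm_R2_def by blast
lemma N_tri: "N (a + c, b + d) \<le> N (a, b) + N (c, d)"
  using AN unfolding absolute_normalized_norm_def is_norm_R2_def by blast
lemma N_abs: "N (a, b) = N (\<bar>a\<bar>, \<bar>b\<bar>)"
  using AN unfolding absolute_normalized_norm_def by blast
lemma N_10: "N (1,0) = 1" and N_01: "N (0,1) = 1"
  using AN unfolding absolute_normalized_norm_def by auto

lemma N_fst: "N (t, 0) = \<bar>t\<bar>"
  using N_hom[of t 1 0] N_10 by simp
lemma N_snd: "N (0, t) = \<bar>t\<bar>"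
  using N_hom[of t 0 1] N_01 by simp

lemma N_le_sum: "N (c, d) \<le> \<bar>c\<bar> + \<bar>d\<bar>"
  using N_tri[of c 0 0 d] N_fst[of c] N_snd[of d] by simp

lemma N_mono1: assumes "0 \<le> a" "a \<le> c" shows "N (a, b) \<le> N (c, b)"
proof (cases "c = 0")
  case True then show ?thesis using assms by simp
next
  case False
  hence c: "c > 0" using assms by simp
  define s where "s = a / c"
  have s0: "0 \<le> s" "s \<le> 1" using assms c by (auto simp: s_def)
  have e1: "a = ((1+s)/2)*c + ((1-s)/2)*(-c)" using c by (simp add: s_def field_simps)
  have e2: "b = ((1+s)/2)*b + ((1-s)/2)*b" by (simp add: field_simps)
  have "N (a, b) \<le> N (((1+s)/2)*c, ((1+s)/2)*b) + N (((1-s)/2)*(-c), ((1-s)/2)*b)"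
    using N_tri[of "((1+s)/2)*c" "((1-s)/2)*(-c)" "((1+s)/2)*b" "((1-s)/2)*b"] e1 e2 by simp
  also have "\<dots> = ((1+s)/2) * N (c, b) + ((1-s)/2) * N (-c, b)"
    using N_hom[of "(1+s)/2" c b] N_hom[of "(1-s)/2" "-c" b] s0 by simp
  also have "N (-c, b) = N (c, b)" using N_abs[of "-c" b] N_abs[of c b] by simp
  finally show ?thesis by (simp add: field_simps)
qed

lemma N_mono2: assumes "0 \<le> b" "b \<le> d" shows "N (a, b) \<le> N (a, d)"
proof (cases "d = 0")
  case True then show ?thesis using assms by simp
next
  case False
  hence c: "d > 0" using assms by simp
  define s where "s = b / d"
  have s0: "0 \<le> s" "s \<le> 1" using assms c by (auto simp: s_def)
  have e1: "b = ((1+s)/2)*d + ((1-s)/2)*(-d)" using c by (simp add: s_def field_simps)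
  have e2: "a = ((1+s)/2)*a + ((1-s)/2)*a" by (simp add: field_simps)
  have "N (a, b) \<le> N (((1+s)/2)*a, ((1+s)/2)*d) + N (((1-s)/2)*a, ((1-s)/2)*(-d))"
    using N_tri[of "((1+s)/2)*a" "((1-s)/2)*a" "((1+s)/2)*d" "((1-s)/2)*(-d)"] e1 e2 by simp
  also have "\<dots> = ((1+s)/2) * N (a, d) + ((1-s)/2) * N (a, -d)"
    using N_hom[of "(1+s)/2" a d] N_hom[of "(1-s)/2" a "-d"] s0 by simp
  also have "N (a, -d) = N (a, d)" using N_abs[of a "-d"] N_abs[of a d] by simp
  finally show ?thesis by (simp add: field_simps)
qed

lemma N_mono: "0 \<le> a \<Longrightarrow> a \<le> c \<Longrightarrow> 0 \<le> b \<Longrightarrow> b \<le> d \<Longrightarrow> N (a, b) \<le> N (c, d)"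
  using N_mono1[of a c b] N_mono2[of b d c] by linarith

lemma sum_norm_tri: "sum_norm N (p - q) \<le> sum_norm N p + sum_norm N q"
proof -
  have "sum_norm N (p - q) \<le> N (norm (fst p) + norm (fst q), norm (snd p) + norm (snd q))"
    unfolding sum_norm_def by (rule N_mono) (auto intro: norm_triangle_ineq4)
  also have "\<dots> \<le> sum_norm N p + sum_norm N q" unfolding sum_norm_def by (rule N_tri)
  finally show ?thesis .
qed


lemma box_nbhd:
  assumes "weak_open_wrt (sum_norm N) W"
  shows "\<forall>(p1::'a::real_normed_vector) (p2::'b::real_normed_vector). (a *\<^sub>R p1, b *\<^sub>R p2) \<in> W \<longrightarrow>
    (\<exists>A B. weak_open_wrt norm A \<and> weak_open_wrt norm B \<and> p1 \<in> A \<and> p2 \<in> B \<and>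
       (\<forall>u\<in>A. \<forall>v\<in>B. (a *\<^sub>R u, b *\<^sub>R v) \<in> W))"
  using assms unfolding weak_open_wrt_def
proof (induction rule: generate_topology.induct)
  case UNIV
  show ?case
    apply (intro allI impI)
    apply (rule exI[of _ UNIV], rule exI[of _ UNIV])
    by (simp add: generate_topology.UNIV)
next
  case (Int S T)
  show ?case
  proof (intro allI impI)
    fix p1 :: 'a and p2 :: 'b assume "(a *\<^sub>R p1, b *\<^sub>R p2) \<in> S \<inter> T"
    then obtain A1 B1 A2 B2 where
      h: "generate_topology {{z. f z \<in> U} |f U. linear f \<and> (\<exists>C. \<forall>z. \<bar>f z\<bar> \<le> C * norm z) \<and> open (U :: real set)} A1"
        "generate_topology {{z. f z \<in> U} |f U. linear f \<and> (\<exists>C. \<forall>z. \<bar>f z\<bar> \<le> C * norm z) \<and> open (U :: real set)} B1"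
        "p1 \<in> A1" "p2 \<in> B1" "\<forall>u\<in>A1. \<forall>v\<in>B1. (a *\<^sub>R u, b *\<^sub>R v) \<in> S"
        "generate_topology {{z. f z \<in> U} |f U. linear f \<and> (\<exists>C. \<forall>z. \<bar>f z\<bar> \<le> C * norm z) \<and> open (U :: real set)} A2"
        "generate_topology {{z. f z \<in> U} |f U. linear f \<and> (\<exists>C. \<forall>z. \<bar>f z\<bar> \<le> C * norm z) \<and> open (U :: real set)} B2"
        "p1 \<in> A2" "p2 \<in> B2" "\<forall>u\<in>A2. \<forall>v\<in>B2. (a *\<^sub>R u, b *\<^sub>R v) \<in> T"
    proof -
      from Int.IH(1)[rule_format, of p1 p2] \<open>(a *\<^sub>R p1, b *\<^sub>R p2) \<in> S \<inter> T\<close>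
      obtain A1 B1 where "generate_topology {{z. f z \<in> U} |f U. linear f \<and> (\<exists>C. \<forall>z. \<bar>f z\<bar> \<le> C * norm z) \<and> open (U :: real set)} A1"
        "generate_topology {{z. f z \<in> U} |f U. linear f \<and> (\<exists>C. \<forall>z. \<bar>f z\<bar> \<le> C * norm z) \<and> open (U :: real set)} B1"
        "p1 \<in> A1" "p2 \<in> B1" "\<forall>u\<in>A1. \<forall>v\<in>B1. (a *\<^sub>R u, b *\<^sub>R v) \<in> S" by blast
      moreover from Int.IH(2)[rule_format, of p1 p2] \<open>(a *\<^sub>R p1, b *\<^sub>R p2) \<in> S \<inter> T\<close>
      obtain A2 B2 where "generate_topology {{z. f z \<in> U} |f U. linear f \<and> (\<exists>C. \<forall>z. \<bar>f z\<bar> \<le> C * norm z) \<and> open (U :: real set)} A2"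
        "generate_topology {{z. f z \<in> U} |f U. linear f \<and> (\<exists>C. \<forall>z. \<bar>f z\<bar> \<le> C * norm z) \<and> open (U :: real set)} B2"
        "p1 \<in> A2" "p2 \<in> B2" "\<forall>u\<in>A2. \<forall>v\<in>B2. (a *\<^sub>R u, b *\<^sub>R v) \<in> T" by blast
      ultimately show ?thesis using that by blast
    qed
    show "\<exists>A B. generate_topology {{z. f z \<in> U} |f U. linear f \<and> (\<exists>C. \<forall>z. \<bar>f z\<bar> \<le> C * norm z) \<and> open (U :: real set)} A \<and>
          generate_topology {{z. f z \<in> U} |f U. linear f \<and> (\<exists>C. \<forall>z. \<bar>f z\<bar> \<le> C * norm z) \<and> open (U :: real set)} B \<and>
          p1 \<in> A \<and> p2 \<in> B \<and> (\<forall>u\<in>A. \<forall>v\<in>B. (a *\<^sub>R u, b *\<^sub>R v) \<in> S \<inter> T)"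
      apply (rule exI[of _ "A1 \<inter> A2"], rule exI[of _ "B1 \<inter> B2"])
      using h by (simp add: generate_topology.Int)
  qed
next
  case (UN K)
  show ?case
  proof (intro allI impI)
    fix p1 :: 'a and p2 :: 'b assume "(a *\<^sub>R p1, b *\<^sub>R p2) \<in> \<Union>K"
    then obtain k where "k \<in> K" "(a *\<^sub>R p1, b *\<^sub>R p2) \<in> k" by blast
    from UN.IH[rule_format, OF \<open>k \<in> K\<close> \<open>(a *\<^sub>R p1, b *\<^sub>R p2) \<in> k\<close>]
    obtain A B where AB: "generate_topology {{z. f z \<in> U} |f U. linear f \<and> (\<exists>C. \<forall>z. \<bar>f z\<bar> \<le> C * norm z) \<and> open (U :: real set)} A"
          "generate_topology {{z. f z \<in> U} |f U. linear f \<and> (\<exists>C. \<forall>z. \<bar>f z\<bar> \<le> C * norm z) \<and> open (U :: real set)} B"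
          "p1 \<in> A" "p2 \<in> B" "\<forall>u\<in>A. \<forall>v\<in>B. (a *\<^sub>R u, b *\<^sub>R v) \<in> k" by blast
    show "\<exists>A B. generate_topology {{z. f z \<in> U} |f U. linear f \<and> (\<exists>C. \<forall>z. \<bar>f z\<bar> \<le> C * norm z) \<and> open (U :: real set)} A \<and>
          generate_topology {{z. f z \<in> U} |f U. linear f \<and> (\<exists>C. \<forall>z. \<bar>f z\<bar> \<le> C * norm z) \<and> open (U :: real set)} B \<and>
          p1 \<in> A \<and> p2 \<in> B \<and> (\<forall>u\<in>A. \<forall>v\<in>B. (a *\<^sub>R u, b *\<^sub>R v) \<in> \<Union>K)"
      apply (rule exI[of _ A], rule exI[of _ B])
      using AB \<open>k \<in> K\<close> by blast
  qed
next
  case (Basis s)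
  from Basis obtain f U where s: "s = {z. f z \<in> U}" and lf: "linear f"
    and fbe: "\<exists>C. \<forall>z. \<bar>f z\<bar> \<le> C * sum_norm N z" and oU: "open U" by blast
  from fbe obtain C where fb: "\<forall>z. \<bar>f z\<bar> \<le> C * sum_norm N z" by blast
  define g where "g u = f (a *\<^sub>R u, 0::'b)" for u :: 'a
  define h where "h v = f (0::'a, b *\<^sub>R v)" for v :: 'b
  have split: "f (a *\<^sub>R u, b *\<^sub>R v) = g u + h v" for u v
  proof -
    have "(a *\<^sub>R u, b *\<^sub>R v) = (a *\<^sub>R u, 0::'b) + (0::'a, b *\<^sub>R v)" by simp
    then show ?thesis unfolding g_def h_def by (metis linear_add[OF lf])
  qed
  have lg: "linear g"
  proof (rule linearI)
    fix u v :: 'a show "g (u + v) = g u + g v" unfolding g_def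
      using linear_add[OF lf, of "(a *\<^sub>R u, 0::'b)" "(a *\<^sub>R v, 0::'b)"]
      by (simp add: scaleR_right_distrib)
  next
    fix c :: real and u :: 'a show "g (c *\<^sub>R u) = c *\<^sub>R g u" unfolding g_def
      using linear_scale[OF lf, of c "(a *\<^sub>R u, 0::'b)"] by (simp add: mult.commute)
  qed
  have lh: "linear h"
  proof (rule linearI)
    fix u v :: 'b show "h (u + v) = h u + h v" unfolding h_def
      using linear_add[OF lf, of "(0::'a, b *\<^sub>R u)" "(0::'a, b *\<^sub>R v)"]
      by (simp add: scaleR_right_distrib)
  next
    fix c :: real and u :: 'b show "h (c *\<^sub>R u) = c *\<^sub>R h u" unfolding h_def
      using linear_scale[OF lf, of c "(0::'a, b *\<^sub>R u)"] by (simp add: mult.commute)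
  qed
  have gb: "\<bar>g u\<bar> \<le> (C * \<bar>a\<bar>) * norm u" for u
    using fb[rule_format, of "(a *\<^sub>R u, 0::'b)"] unfolding g_def sum_norm_def
    by (simp add: N_fst mult.assoc)
  have hb: "\<bar>h u\<bar> \<le> (C * \<bar>b\<bar>) * norm u" for u
    using fb[rule_format, of "(0::'a, b *\<^sub>R u)"] unfolding h_def sum_norm_def
    by (simp add: N_snd mult.assoc)
  show ?case
  proof (intro allI impI)
    fix p1 :: 'a and p2 :: 'b assume "(a *\<^sub>R p1, b *\<^sub>R p2) \<in> s"
    hence "g p1 + h p2 \<in> U" using s split by simp
    then obtain e where e: "e > 0" "ball (g p1 + h p2) e \<subseteq> U" using openE[OF oU] by metis
    define A where "A = {u. g u \<in> ball (g p1) (e/2)}"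
    define B where "B = {v. h v \<in> ball (h p2) (e/2)}"
    have gA: "generate_topology {{z. f z \<in> U} |f U. linear f \<and> (\<exists>C. \<forall>z. \<bar>f z\<bar> \<le> C * norm z) \<and> open (U :: real set)} A"
      unfolding A_def apply (rule generate_topology.Basis)
      apply (rule CollectI, rule exI[of _ g], rule exI[of _ "ball (g p1) (e/2)"])
      using lg gb by auto
    have gB: "generate_topology {{z. f z \<in> U} |f U. linear f \<and> (\<exists>C. \<forall>z. \<bar>f z\<bar> \<le> C * norm z) \<and> open (U :: real set)} B"
      unfolding B_def apply (rule generate_topology.Basis)
      apply (rule CollectI, rule exI[of _ h], rule exI[of _ "ball (h p2) (e/2)"])
      using lh hb by auto
    have "\<forall>u\<in>A. \<forall>v\<in>B. (a *\<^sub>R u, b *\<^sub>R v) \<in> s"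
    proof (intro ballI)
      fix u v assume "u \<in> A" "v \<in> B"
      hence "\<bar>g p1 - g u\<bar> < e/2" "\<bar>h p2 - h v\<bar> < e/2"
        unfolding A_def B_def by (auto simp: dist_real_def)
      hence "g u + h v \<in> ball (g p1 + h p2) e" by (simp add: dist_real_def abs_if split: if_splits)
      thus "(a *\<^sub>R u, b *\<^sub>R v) \<in> s" using e s split by auto
    qed
    moreover have "p1 \<in> A" "p2 \<in> B" using e by (auto simp: A_def B_def)
    ultimately show "\<exists>A B. generate_topology {{z. f z \<in> U} |f U. linear f \<and> (\<exists>C. \<forall>z. \<bar>f z\<bar> \<le> C * norm z) \<and> open (U :: real set)} A \<and>
          generate_topology {{z. f z \<in> U} |f U. linear f \<and> (\<exists>C. \<forall>z. \<bar>f z\<bar> \<le> C * norm z) \<and> open (U :: real set)} B \<and>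
          p1 \<in> A \<and> p2 \<in> B \<and> (\<forall>u\<in>A. \<forall>v\<in>B. (a *\<^sub>R u, b *\<^sub>R v) \<in> s)"
      using gA gB by blast
  qed
qed


end

lemma sup_eq2:
  fixes F :: "'c \<Rightarrow> real"
  assumes "z0 \<in> S" "\<forall>z\<in>S. F z \<le> 2" "\<forall>\<epsilon>>0. \<exists>z\<in>S. F z > 2 - \<epsilon>"
  shows "(SUP z\<in>S. F z) = 2"
proof (rule cSup_eq_non_empty)
  show "F ` S \<noteq> {}" using assms(1) by blast
  show "\<And>x. x \<in> F ` S \<Longrightarrow> x \<le> 2" using assms(2) by blast
  fix y assume h: "\<And>x. x \<in> F ` S \<Longrightarrow> x \<le> y"
  show "2 \<le> y"
  proof (rule ccontr)
    assume "\<not> 2 \<le> y"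
    then have "2 - y > 0" by simp
    then obtain z where "z \<in> S" "F z > 2 - (2 - y)" using assms(3) by blast
    with h[of "F z"] show False by auto
  qed
qed

lemma delta_approx:
  fixes x :: "'c::real_normed_vector"
  assumes "super_delta_wrt norm x" "weak_open_wrt norm A" "x \<in> A" "\<epsilon> > 0"
  shows "\<exists>u\<in>A. norm u \<le> 1 \<and> norm (x - u) > 2 - \<epsilon>"
proof -
  have nx: "norm x = 1" and S: "(SUP z \<in> A \<inter> {z. norm z \<le> 1}. norm (x - z)) = 2"
    using assms unfolding super_delta_wrt_def by auto
  have lt: "2 - \<epsilon> < (SUP z \<in> A \<inter> {z. norm z \<le> 1}. norm (x - z))" using S assms(4) by simp
  have ne: "A \<inter> {z. norm z \<le> 1} \<noteq> {}" using nx assms(3) by auto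
  have bdd: "bdd_above ((\<lambda>z. norm (x - z)) ` (A \<inter> {z. norm z \<le> 1}))"
  proof (rule bdd_aboveI2)
    fix z assume "z \<in> A \<inter> {z. norm z \<le> 1}"
    then show "norm (x - z) \<le> 2" using norm_triangle_ineq4[of x z] nx by auto
  qed
  obtain u where "u \<in> A \<inter> {z. norm z \<le> 1}" "2 - \<epsilon> < norm (x - u)"
    using lt unfolding less_cSUP_iff[OF ne bdd] by blast
  then show ?thesis by auto
qed

context fixes N :: "real \<times> real \<Rightarrow> real" assumes AN: "absolute_normalized_norm N"
begin

lemma sup_le2: "sum_norm N p = 1 \<Longrightarrow> sum_norm N q \<le> 1 \<Longrightarrow> sum_norm N (p - q) \<le> 2"
  using sum_norm_tri[OF AN, of p q] by simp

lemma part1: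
  fixes x :: "'a::real_normed_vector" and y :: "'b::real_normed_vector"
  assumes x: "super_delta_wrt norm x" and y: "super_delta_wrt norm y" and ab: "N (a, b) = 1"
  shows "super_delta_wrt (sum_norm N) (a *\<^sub>R x, b *\<^sub>R y)"
proof -
  have nx: "norm x = 1" and ny: "norm y = 1" using x y unfolding super_delta_wrt_def by auto
  have Nab: "N (\<bar>a\<bar>, \<bar>b\<bar>) = 1" using ab N_abs[OF AN, of a b] by simp
  have p1: "sum_norm N (a *\<^sub>R x, b *\<^sub>R y) = 1" unfolding sum_norm_def using Nab nx ny by simp
  show ?thesis unfolding super_delta_wrt_def
  proof (intro conjI p1 allI impI)
    fix W assume W: "weak_open_wrt (sum_norm N) W \<and> (a *\<^sub>R x, b *\<^sub>R y) \<in> W"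
    from box_nbhd[OF AN, of W a b] W have "\<exists>A B. weak_open_wrt norm A \<and> weak_open_wrt norm B \<and>
      x \<in> A \<and> y \<in> B \<and> (\<forall>u\<in>A. \<forall>v\<in>B. (a *\<^sub>R u, b *\<^sub>R v) \<in> W)" by blast
    then obtain A B where AB: "weak_open_wrt norm A" "weak_open_wrt norm B"
      "x \<in> A" "y \<in> B" "\<forall>u\<in>A. \<forall>v\<in>B. (a *\<^sub>R u, b *\<^sub>R v) \<in> W"
      by blast
    show "(SUP z \<in> W \<inter> {z. sum_norm N z \<le> 1}. sum_norm N ((a *\<^sub>R x, b *\<^sub>R y) - z)) = 2"
    proof (rule sup_eq2)
      show "(a *\<^sub>R x, b *\<^sub>R y) \<in> W \<inter> {z. sum_norm N z \<le> 1}" using W p1 by simp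
      show "\<forall>z\<in>W \<inter> {z. sum_norm N z \<le> 1}. sum_norm N ((a *\<^sub>R x, b *\<^sub>R y) - z) \<le> 2"
        using sup_le2[OF p1] by blast
      show "\<forall>\<epsilon>>0. \<exists>z\<in>W \<inter> {z. sum_norm N z \<le> 1}. sum_norm N ((a *\<^sub>R x, b *\<^sub>R y) - z) > 2 - \<epsilon>"
      proof (intro allI impI)
        fix \<epsilon> :: real assume e: "\<epsilon> > 0"
        define \<delta> where "\<delta> = \<epsilon> / (\<bar>a\<bar> + \<bar>b\<bar> + 1)"
        have d: "\<delta> > 0" using e by (simp add: \<delta>_def add_pos_nonneg)
        have de: "(\<bar>a\<bar> + \<bar>b\<bar>) * \<delta> < \<epsilon>"
        proof -
          have "(\<bar>a\<bar> + \<bar>b\<bar>) * \<delta> < (\<bar>a\<bar> + \<bar>b\<bar> + 1) * \<delta>" using d by simp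
          also have "\<dots> = \<epsilon>" unfolding \<delta>_def by (simp add: add_pos_nonneg)
          finally show ?thesis .
        qed
        obtain u where u: "u \<in> A" "norm u \<le> 1" "norm (x - u) > 2 - \<delta>"
          using delta_approx[OF x AB(1) AB(3) d] by blast
        obtain v where v: "v \<in> B" "norm v \<le> 1" "norm (y - v) > 2 - \<delta>"
          using delta_approx[OF y AB(2) AB(4) d] by blast
        define s where "s = norm (x - u)"
        define t where "t = norm (y - v)"
        have s2: "s \<le> 2" unfolding s_def using norm_triangle_ineq4[of x u] nx u by simp
        have t2: "t \<le> 2" unfolding t_def using norm_triangle_ineq4[of y v] ny v by simp
        have zW: "(a *\<^sub>R u, b *\<^sub>R v) \<in> W" using AB u v by blast
        have zn: "sum_norm N (a *\<^sub>R u, b *\<^sub>R v) \<le> 1"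
          unfolding sum_norm_def using N_mono[OF AN, of "\<bar>a\<bar> * norm u" "\<bar>a\<bar>" "\<bar>b\<bar> * norm v" "\<bar>b\<bar>"] u v Nab
          by (simp add: mult_left_le)
        have dist: "sum_norm N ((a *\<^sub>R x, b *\<^sub>R y) - (a *\<^sub>R u, b *\<^sub>R v)) = N (\<bar>a\<bar> * s, \<bar>b\<bar> * t)"
          unfolding sum_norm_def s_def t_def by (simp add: scaleR_diff_right[symmetric])
        have "2 = N (2 * \<bar>a\<bar>, 2 * \<bar>b\<bar>)" using N_hom[OF AN, of 2 "\<bar>a\<bar>" "\<bar>b\<bar>"] Nab by simp
        also have "\<dots> = N (\<bar>a\<bar> * s + \<bar>a\<bar> * (2 - s), \<bar>b\<bar> * t + \<bar>b\<bar> * (2 - t))" by (simp add: algebra_simps)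
        also have "\<dots> \<le> N (\<bar>a\<bar> * s, \<bar>b\<bar> * t) + N (\<bar>a\<bar> * (2 - s), \<bar>b\<bar> * (2 - t))" by (rule N_tri[OF AN])
        also have "N (\<bar>a\<bar> * (2 - s), \<bar>b\<bar> * (2 - t)) \<le> \<bar>a\<bar> * (2 - s) + \<bar>b\<bar> * (2 - t)"
          using N_le_sum[OF AN, of "\<bar>a\<bar> * (2 - s)" "\<bar>b\<bar> * (2 - t)"] s2 t2 by (simp add: abs_mult)
        also have "\<bar>a\<bar> * (2 - s) + \<bar>b\<bar> * (2 - t) \<le> (\<bar>a\<bar> + \<bar>b\<bar>) * \<delta>"
        proof -
          have "\<bar>a\<bar> * (2 - s) \<le> \<bar>a\<bar> * \<delta>" using u(3) unfolding s_def by (intro mult_left_mono) auto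
          moreover have "\<bar>b\<bar> * (2 - t) \<le> \<bar>b\<bar> * \<delta>" using v(3) unfolding t_def by (intro mult_left_mono) auto
          ultimately show ?thesis by (simp add: algebra_simps)
        qed
        finally have "2 - \<epsilon> < N (\<bar>a\<bar> * s, \<bar>b\<bar> * t)" using de by linarith
        then show "\<exists>z\<in>W \<inter> {z. sum_norm N z \<le> 1}. sum_norm N ((a *\<^sub>R x, b *\<^sub>R y) - z) > 2 - \<epsilon>"
          apply (intro bexI[of _ "(a *\<^sub>R u, b *\<^sub>R v)"])
          using zW zn dist by auto
      qed
    qed
  qed
qed


lemma part2:
  fixes x :: "'a::real_normed_vector"
  assumes x: "super_delta_wrt norm x"
  shows "super_delta_wrt (sum_norm N) (x, 0::'b::real_normed_vector)"
proof -
  have nx: "norm x = 1" using x unfolding super_delta_wrt_def by auto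
  have p1: "sum_norm N (x, 0::'b) = 1" unfolding sum_norm_def using nx N_fst[OF AN, of 1] by simp
  show ?thesis unfolding super_delta_wrt_def
  proof (intro conjI p1 allI impI)
    fix W assume W: "weak_open_wrt (sum_norm N) W \<and> (x, 0::'b) \<in> W"
    have W': "(1 *\<^sub>R x, 0 *\<^sub>R (0::'b)) \<in> W" using W by simp
    from box_nbhd[OF AN, of W 1 0] W W' have "\<exists>A B. weak_open_wrt norm A \<and> weak_open_wrt norm B \<and>
      x \<in> A \<and> (0::'b) \<in> B \<and> (\<forall>u\<in>A. \<forall>v\<in>B. (1 *\<^sub>R u, 0 *\<^sub>R v) \<in> W)" by blast
    then obtain A B where AB: "weak_open_wrt norm A" "x \<in> A" "(0::'b) \<in> B"
      "\<forall>u\<in>A. \<forall>v\<in>B. (1 *\<^sub>R u, 0 *\<^sub>R v) \<in> W" by blast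
    show "(SUP z \<in> W \<inter> {z. sum_norm N z \<le> 1}. sum_norm N ((x, 0::'b) - z)) = 2"
    proof (rule sup_eq2)
      show "(x, 0::'b) \<in> W \<inter> {z. sum_norm N z \<le> 1}" using W p1 by simp
      show "\<forall>z\<in>W \<inter> {z. sum_norm N z \<le> 1}. sum_norm N ((x, 0::'b) - z) \<le> 2"
        using sup_le2[OF p1] by blast
      show "\<forall>\<epsilon>>0. \<exists>z\<in>W \<inter> {z. sum_norm N z \<le> 1}. sum_norm N ((x, 0::'b) - z) > 2 - \<epsilon>"
      proof (intro allI impI)
        fix \<epsilon> :: real assume e: "\<epsilon> > 0"
        obtain u where u: "u \<in> A" "norm u \<le> 1" "norm (x - u) > 2 - \<epsilon>"
          using delta_approx[OF x AB(1) AB(2) e] by blast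
        have zW: "(u, 0::'b) \<in> W" using AB(4) u(1) AB(3) by fastforce
        have zn: "sum_norm N (u, 0::'b) \<le> 1" unfolding sum_norm_def using u N_fst[OF AN, of "norm u"] by simp
        have d: "sum_norm N ((x, 0::'b) - (u, 0)) = norm (x - u)"
          unfolding sum_norm_def using N_fst[OF AN, of "norm (x - u)"] by simp
        show "\<exists>z\<in>W \<inter> {z. sum_norm N z \<le> 1}. sum_norm N ((x, 0::'b) - z) > 2 - \<epsilon>"
          apply (intro bexI[of _ "(u, 0::'b)"])
          using zW zn d u by auto
      qed
    qed
  qed
qed

lemma part3:
  fixes y :: "'b::real_normed_vector"
  assumes y: "super_delta_wrt norm y"
  shows "super_delta_wrt (sum_norm N) (0::'a::real_normed_vector, y)"
proof -
  have ny: "norm y = 1" using y unfolding super_delta_wrt_def by auto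
  have p1: "sum_norm N (0::'a, y) = 1" unfolding sum_norm_def using ny N_snd[OF AN, of 1] by simp
  show ?thesis unfolding super_delta_wrt_def
  proof (intro conjI p1 allI impI)
    fix W assume W: "weak_open_wrt (sum_norm N) W \<and> (0::'a, y) \<in> W"
    have W': "(0 *\<^sub>R (0::'a), 1 *\<^sub>R y) \<in> W" using W by simp
    from box_nbhd[OF AN, of W 0 1] W W' have "\<exists>A B. weak_open_wrt norm A \<and> weak_open_wrt norm B \<and>
      (0::'a) \<in> A \<and> y \<in> B \<and> (\<forall>u\<in>A. \<forall>v\<in>B. (0 *\<^sub>R u, 1 *\<^sub>R v) \<in> W)" by blast
    then obtain A B where AB: "weak_open_wrt norm B" "y \<in> B" "(0::'a) \<in> A"
      "\<forall>u\<in>A. \<forall>v\<in>B. (0 *\<^sub>R u, 1 *\<^sub>R v) \<in> W" by blast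
    show "(SUP z \<in> W \<inter> {z. sum_norm N z \<le> 1}. sum_norm N ((0::'a, y) - z)) = 2"
    proof (rule sup_eq2)
      show "(0::'a, y) \<in> W \<inter> {z. sum_norm N z \<le> 1}" using W p1 by simp
      show "\<forall>z\<in>W \<inter> {z. sum_norm N z \<le> 1}. sum_norm N ((0::'a, y) - z) \<le> 2"
        using sup_le2[OF p1] by blast
      show "\<forall>\<epsilon>>0. \<exists>z\<in>W \<inter> {z. sum_norm N z \<le> 1}. sum_norm N ((0::'a, y) - z) > 2 - \<epsilon>"
      proof (intro allI impI)
        fix \<epsilon> :: real assume e: "\<epsilon> > 0"
        obtain v where v: "v \<in> B" "norm v \<le> 1" "norm (y - v) > 2 - \<epsilon>"
          using delta_approx[OF y AB(1) AB(2) e] by blast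
        have zW: "(0::'a, v) \<in> W" using AB(4) v(1) AB(3) by fastforce
        have zn: "sum_norm N (0::'a, v) \<le> 1" unfolding sum_norm_def using v N_snd[OF AN, of "norm v"] by simp
        have d: "sum_norm N ((0::'a, y) - (0, v)) = norm (y - v)"
          unfolding sum_norm_def using N_snd[OF AN, of "norm (y - v)"] by simp
        show "\<exists>z\<in>W \<inter> {z. sum_norm N z \<le> 1}. sum_norm N ((0::'a, y) - z) > 2 - \<epsilon>"
          apply (intro bexI[of _ "(0::'a, v)"])
          using zW zn d v by auto
      qed
    qed
  qed
qed

end

theorem mainTheorem6:
  fixes N :: "real \<times> real \<Rightarrow> real"
  assumes "absolute_normalized_norm N"
  shows "(\<forall>(x::'a::banach) (y::'b::banach) a b.
            super_delta_wrt norm x \<and> super_delta_wrt norm y \<and> N (a, b) = 1 \<longrightarrow>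
            super_delta_wrt (sum_norm N) (a *\<^sub>R x, b *\<^sub>R y))
       \<and> (\<forall>x::'a. super_delta_wrt norm x \<longrightarrow> super_delta_wrt (sum_norm N) (x, 0::'b))
       \<and> (\<forall>y::'b. super_delta_wrt norm y \<longrightarrow> super_delta_wrt (sum_norm N) (0::'a, y))"
  using part1[OF assms] part2[OF assms] part3[OF assms] by blast

end
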